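(* Let $\lambda$ be a countable limit ordinal and let $\rho<\lambda$ be an isolated ordinal. Then there are a surjection $\diamond_{\rho,\lambda}\colon [\rho,\lambda) \to \mathrm{LIM}((\rho,\lambda])$, a mapping $\ell_{\rho,\lambda}\colon [\rho,\lambda] \to \omega \setminus \{0\}$, and a mapping $a_{\rho,\lambda}\colon \mathrm{LIM}((\rho,\lambda]) \times \omega \to [\rho,\lambda)$ such that: (a) for every $\beta \in [\rho,\lambda)$ there exists a positive integer $s$ with $\beta < \diamond_{\rho,\lambda}(\beta) < \diamond_{\rho,\lambda}^2(\beta)<\dots<\diamond_{\rho,\lambda}^{s}(\beta)=\lambda$ (where $\diamond^k$ denotes the $k$-fold iterate); (b) for every $\mu \in \mathrm{LIM}((\rho,\lambda])$: the sequence $(a_{\rho,\lambda}(\mu,k))_{k=0}^{\infty}$ is increasing with limit $\mu$; $\diamond_{\rho,\lambda}^{-1}(\mu) = \{a_{\rho,\lambda}(\mu,k) : k \in \omega\}$; $\ell_{\rho,\lambda}(a_{\rho,\lambda}(\mu,k))=\ell_{\rho,\lambda}(\mu)+k$ for all $k\in\omega$; moreover $\ell_{\rho,\lambda}(\lambda) = 1$ and $\ell_{\rho,\lambda}(\rho) = 1$; (c) for every $\beta \in [\rho,\lambda)$ and every $\gamma \in (\beta,\diamond_{\rho,\lambda}(\beta))$ we have $\ell_{\rho,\lambda}(\gamma)>\ell_{\rho,\lambda}(\beta)$ and $\diamond_{\rho,\lambda}(\gamma)\le\diamond_{\rho,\lambda}(\beta)$; (d) for every $\beta \in [\rho,\lambda)$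 we have $\ell_{\rho,\lambda}(\beta+1)=\ell_{\rho,\lambda}(\beta)+1$.
   Context: An ordinal is isolated if it is not a limit ordinal (so $0$ and successor ordinals are isolated). For a set $A$ of ordinals, $\mathrm{LIM}(A)$ denotes the set of limit ordinals in $A$. Intervals such as $[\rho,\lambda)$ are intervals of ordinals. *)

theory Defs
  imports Main "HOL-Library.Countable_Set"
begin

text \<open>Ordinals are modelled as elements of an arbitrary well-ordered type.
  The ordinals up to lam correspond to the initial segment at lam.\<close>

definition is_limit :: "'a::wellorder \<Rightarrow> bool" where
  "is_limit x \<longleftrightarrow> (\<exists>y. y < x) \<and> (\<forall>y. y < x \<longrightarrow> (\<exists>z. y < z \<and> z < x))"

definition isolated :: "'a::wellorder \<Rightarrow> bool" where
  "isolated x \<longleftrightarrow> \<not> is_limit x"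

definition osucc :: "'a::wellorder \<Rightarrow> 'a" where
  "osucc b = (LEAST c. b < c)"

definition LIMs :: "'a::wellorder set \<Rightarrow> 'a set" where
  "LIMs A = {x \<in> A. is_limit x}"

end

theory Submission
  imports Defs
begin


lemma osucc_gt: assumes "(b::'a::wellorder) < x" shows "b < osucc b"
  unfolding osucc_def by (rule LeastI[of "\<lambda>c. b < c" x]) (rule assms)

lemma osucc_le: assumes "(b::'a::wellorder) < c" shows "osucc b \<le> c"
  unfolding osucc_def by (rule Least_le) (rule assms)

lemma osucc_not_limit: assumes "(b::'a::wellorder) < x" shows "\<not> is_limit (osucc b)"
proof
  assume "is_limit (osucc b)"
  then obtain z where "b < z" "z < osucc b" using osucc_gt[OF assms] unfolding is_limit_def by blast
  with osucc_le show False by (meson leD)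
qed

lemma osucc_less_limit: assumes "is_limit l" "(b::'a::wellorder) < l" shows "osucc b < l"
  using osucc_le[OF assms(2)] osucc_not_limit[OF assms(2)] assms(1)
  by (metis order.not_eq_order_implies_strict)

lemma nonlimit_pred: assumes "\<not> is_limit v" "(y::'a::wellorder) < v"
  shows "\<exists>y'. y' < v \<and> v = osucc y'"
proof -
  from assms obtain y' where y': "y' < v" "\<forall>z. \<not>(y' < z \<and> z < v)" unfolding is_limit_def by blast
  have "osucc y' \<le> v" using osucc_le[OF y'(1)] .
  moreover have "\<not> osucc y' < v" using y'(2) osucc_gt[OF y'(1)] by blast
  ultimately show ?thesis using y'(1) by (metis order.not_eq_order_implies_strict)
qed

lemma ladder:
  fixes lam rho :: "'a::wellorder"
  assumes lim: "is_limit lam" and cnt: "countable {x. x < lam}" and rl: "rho < lam"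
  shows "\<exists>c::nat\<Rightarrow>'a. c 0 = rho \<and> strict_mono c \<and> (\<forall>k. c k < lam) \<and> (\<forall>g<lam. \<exists>k. g < c k)
     \<and> (\<forall>k. c (Suc k) = osucc (c k) \<or> is_limit (c (Suc k)))"
proof (cases "\<forall>x<lam. \<exists>m. is_limit m \<and> x < m \<and> m < lam")
  case True
  define e where "e = from_nat_into {x. x < lam}"
  have e: "range e = {x. x < lam}" unfolding e_def using range_from_nat_into[OF _ cnt] rl by blast
  define c where "c = rec_nat rho (\<lambda>k ck. LEAST m. is_limit m \<and> max ck (e k) < m \<and> m < lam)"
  have c0: "c 0 = rho" unfolding c_def by simp
  have cS: "c (Suc k) = (LEAST m. is_limit m \<and> max (c k) (e k) < m \<and> m < lam)" for k
    unfolding c_def by simp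
  have ex: "\<exists>m. is_limit m \<and> max x (e k) < m \<and> m < lam" if "x < lam" for x k
  proof -
    have "e k < lam" using e by auto
    hence "max x (e k) < lam" using that by simp
    thus ?thesis using True by blast
  qed
  have cl: "c k < lam" for k
  proof (induction k)
    case 0 then show ?case using c0 rl by simp
  next
    case (Suc k) then show ?case unfolding cS using LeastI_ex[OF ex[OF Suc.IH, of k]] by blast
  qed
  have cS': "is_limit (c (Suc k)) \<and> max (c k) (e k) < c (Suc k)" for k
    unfolding cS using LeastI_ex[OF ex[OF cl, of k k]] by blast
  have "strict_mono c" unfolding strict_mono_Suc_iff using cS' by (metis max.strict_boundedE)
  moreover have "\<exists>k. g < c k" if "g < lam" for g
  proof -
    have "g \<in> range e" using e that by simp
    then obtain n where "g = e n" by blast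
    then show ?thesis using cS'[of n] by (metis max.strict_boundedE)
  qed
  ultimately show ?thesis using c0 cl cS' by blast
next
  case False
  then obtain x0 where x0: "x0 < lam" "\<forall>m. is_limit m \<and> x0 < m \<longrightarrow> \<not> m < lam" by blast
  define P where "P y \<longleftrightarrow> rho \<le> y \<and> y < lam \<and> (\<forall>m. is_limit m \<and> y < m \<longrightarrow> lam \<le> m)" for y
  have "P (max rho x0)" unfolding P_def using x0 rl by (auto simp: not_less)
  hence Pv: "P (Least P)" by (rule LeastI)
  define v where "v = Least P"
  have vP: "P v" using Pv v_def by simp
  have v_cases: "v = rho \<or> is_limit v"
  proof (rule ccontr)
    assume "\<not> (v = rho \<or> is_limit v)"
    hence "rho < v" "\<not> is_limit v" using vP unfolding P_def by auto
    then obtain y' where y': "y' < v" "v = osucc y'" using nonlimit_pred by blast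
    have "P y'"
      unfolding P_def
    proof (intro conjI allI impI)
      show "rho \<le> y'" using \<open>rho < v\<close> y' osucc_le by (metis not_less)
      show "y' < lam" using y' vP unfolding P_def by auto
      fix m assume m: "is_limit m \<and> y' < m"
      then have "v \<le> m" using y' osucc_le by metis
      moreover have "v \<noteq> m" using m \<open>\<not> is_limit v\<close> by auto
      ultimately have "v < m" by simp
      then show "lam \<le> m" using vP m unfolding P_def by auto
    qed
    hence "v \<le> y'" unfolding v_def by (rule Least_le)
    with y' show False by simp
  qed
  define s where "s = (if v = rho then osucc rho else v)"
  define c where "c k = (case k of 0 \<Rightarrow> rho | Suc j \<Rightarrow> (osucc ^^ j) s)" for k
  have c0: "c 0 = rho" unfolding c_def by simp
  have c1: "c (Suc j) = (osucc ^^ j) s" for j unfolding c_def by simp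
  have sl: "s < lam" using vP osucc_less_limit[OF lim rl] unfolding s_def P_def by auto
  have rs: "rho < s" using vP osucc_gt[OF rl] v_cases unfolding s_def P_def by auto
  have vs: "v \<le> s" unfolding s_def using osucc_gt[OF rl] by auto
  have cl: "c k < lam" for k
  proof (induction k)
    case 0 then show ?case using c0 rl by simp
  next
    case (Suc k) then show ?case
    proof (cases k)
      case 0 then show ?thesis using c1 sl by simp
    next
      case (Suc j) then show ?thesis using Suc.IH c1 osucc_less_limit[OF lim] by simp
    qed
  qed
  have cS: "c k < c (Suc k)" for k
  proof (cases k)
    case 0 then show ?thesis using c0 c1 rs by simp
  next
    case (Suc j) then show ?thesis using c1 osucc_gt[OF cl[of k]] by simp
  qed
  have cm: "strict_mono c" unfolding strict_mono_Suc_iff using cS by auto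
  have cs: "c (Suc k) = osucc (c k) \<or> is_limit (c (Suc k))" for k
  proof (cases k)
    case 0 then show ?thesis using c0 c1 v_cases unfolding s_def by auto
  next
    case (Suc j) then show ?thesis using c1 by simp
  qed
  have cof: "\<exists>k. g < c k" if "g < lam" for g
  proof (rule ccontr)
    assume "\<not> (\<exists>k. g < c k)"
    hence ub: "\<forall>k. c k \<le> g" by (simp add: not_less)
    define Q where "Q m \<longleftrightarrow> (\<forall>k. c k < m)" for m
    have "Q (osucc g)" unfolding Q_def using ub osucc_gt[OF that] by (meson le_less_trans)
    hence QM: "Q (Least Q)" by (rule LeastI)
    define M where "M = Least Q"
    have Mle: "M \<le> osucc g" unfolding M_def by (rule Least_le) fact
    have Ml: "M < lam" using Mle osucc_less_limit[OF lim that] by simp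
    have "is_limit M" unfolding is_limit_def
    proof (intro conjI allI impI)
      show "\<exists>y. y < M" using QM M_def Q_def by blast
      fix y assume "y < M"
      hence "\<not> Q y" unfolding M_def by (rule not_less_Least)
      then obtain k where "y \<le> c k" unfolding Q_def by (auto simp: not_less)
      then show "\<exists>z. y < z \<and> z < M" using cS[of k] QM M_def Q_def
        by (meson le_less_trans)
    qed
    moreover have "v < M" using vs c1[of 0] QM M_def Q_def by (metis funpow_0 le_less_trans)
    ultimately have "lam \<le> M" using vP unfolding P_def by auto
    with Ml show False by simp
  qed
  show ?thesis using c0 cm cl cof cs by blast
qed



definition good :: "'a::wellorder \<Rightarrow> 'a \<Rightarrow> ('a \<Rightarrow> 'a) \<Rightarrow> ('a \<Rightarrow> nat) \<Rightarrow> ('a \<Rightarrow> nat \<Rightarrow> 'a) \<Rightarrow> bool" where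
  "good rho lam dia ell a \<longleftrightarrow>
    dia ` {rho..<lam} = LIMs {rho<..lam}
  \<and> (\<forall>b\<in>{rho..lam}. ell b > 0)
  \<and> (\<forall>\<mu>\<in>LIMs {rho<..lam}. \<forall>k. a \<mu> k \<in> {rho..<lam})
  \<and> (\<forall>b\<in>{rho..<lam}. \<exists>s>0. (dia ^^ s) b = lam \<and>
        (\<forall>k<s. (dia ^^ k) b < (dia ^^ Suc k) b))
  \<and> (\<forall>\<mu>\<in>LIMs {rho<..lam}.
        strict_mono (a \<mu>)
      \<and> (\<forall>k. a \<mu> k < \<mu>) \<and> (\<forall>g<\<mu>. \<exists>k. g < a \<mu> k)
      \<and> {b\<in>{rho..<lam}. dia b = \<mu>} = range (a \<mu>)
      \<and> (\<forall>k. ell (a \<mu> k) = ell \<mu> + k))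
  \<and> ell lam = 1 \<and> ell rho = 1
  \<and> (\<forall>b\<in>{rho..<lam}. \<forall>g. b < g \<and> g < dia b \<longrightarrow> ell g > ell b \<and> dia g \<le> dia b)
  \<and> (\<forall>b\<in>{rho..<lam}. ell (osucc b) = ell b + 1)"

lemma good_1: "good rho lam dia ell a \<Longrightarrow> dia ` {rho..<lam} = LIMs {rho<..lam}" unfolding good_def by (elim conjE)
lemma good_2: "good rho lam dia ell a \<Longrightarrow> (\<forall>b\<in>{rho..lam}. ell b > 0)" unfolding good_def by (elim conjE)
lemma good_3: "good rho lam dia ell a \<Longrightarrow> (\<forall>\<mu>\<in>LIMs {rho<..lam}. \<forall>k. a \<mu> k \<in> {rho..<lam})" unfolding good_def by (elim conjE)
lemma good_4: "good rho lam dia ell a \<Longrightarrow> (\<forall>b\<in>{rho..<lam}. \<exists>s>0. (dia ^^ s) b = lam \<and>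
        (\<forall>k<s. (dia ^^ k) b < (dia ^^ Suc k) b))" unfolding good_def by (elim conjE)
lemma good_5: "good rho lam dia ell a \<Longrightarrow> (\<forall>\<mu>\<in>LIMs {rho<..lam}.
        strict_mono (a \<mu>)
      \<and> (\<forall>k. a \<mu> k < \<mu>) \<and> (\<forall>g<\<mu>. \<exists>k. g < a \<mu> k)
      \<and> {b\<in>{rho..<lam}. dia b = \<mu>} = range (a \<mu>)
      \<and> (\<forall>k. ell (a \<mu> k) = ell \<mu> + k))" unfolding good_def by (elim conjE)
lemma good_6: "good rho lam dia ell a \<Longrightarrow> ell lam = 1" unfolding good_def by (elim conjE)
lemma good_7: "good rho lam dia ell a \<Longrightarrow> ell rho = 1" unfolding good_def by (elim conjE)
lemma good_8: "good rho lam dia ell a \<Longrightarrow> (\<forall>b\<in>{rho..<lam}. \<forall>g. b < g \<and> g < dia b \<longrightarrow> ell g > ell b \<and> dia g \<le> dia b)" unfolding good_def by (elim conjE)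
lemma good_9: "good rho lam dia ell a \<Longrightarrow> (\<forall>b\<in>{rho..<lam}. ell (osucc b) = ell b + 1)" unfolding good_def by (elim conjE)

lemma chain_lt:
  fixes f :: "'a::order \<Rightarrow> 'a" and b :: 'a
  assumes "\<forall>k<s. (f ^^ k) b < (f ^^ Suc k) b"
  shows "i < j \<Longrightarrow> j \<le> s \<Longrightarrow> (f ^^ i) b < (f ^^ j) b"
proof (induction j)
  case 0 then show ?case by simp
next
  case (Suc j)
  have s: "(f ^^ j) b < (f ^^ Suc j) b" using assms Suc.prems by simp
  show ?case
  proof (cases "i = j")
    case True then show ?thesis using s by simp
  next
    case False
    then have "i < j" "j \<le> s" using Suc.prems by auto
    then have "(f ^^ i) b < (f ^^ j) b" by (rule Suc.IH)
    then show ?thesis using s by (rule less_trans)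
  qed
qed

lemma main:
  fixes lam :: "'a::wellorder"
  shows "is_limit lam \<Longrightarrow> countable {x. x < lam} \<Longrightarrow> isolated rho \<Longrightarrow> rho < lam
    \<Longrightarrow> \<exists>dia ell a. good rho lam dia ell a"
proof (induction lam arbitrary: rho rule: less_induct)
  case (less lam rho)
  obtain c where c0: "c 0 = rho" and cm: "strict_mono c" and cl: "\<And>k. c k < lam"
    and cof: "\<And>g. g < lam \<Longrightarrow> \<exists>k. g < c k"
    and cs: "\<And>k. c (Suc k) = osucc (c k) \<or> is_limit (c (Suc k))"
    using ladder[OF less.prems(1,2,4)] by blast
  have cS: "c k < c (Suc k)" for k using cm strict_mono_Suc_iff by blast
  have cle: "c i \<le> c j \<longleftrightarrow> i \<le> j" for i j using cm strict_mono_less_eq by blast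
  have clt: "c i < c j \<longleftrightarrow> i < j" for i j using cm strict_mono_less by blast
  have "\<forall>k. \<exists>t. is_limit (c (Suc k)) \<longrightarrow>
      good (osucc (c k)) (c (Suc k)) (fst t) (fst (snd t)) (snd (snd t))"
  proof
    fix k show "\<exists>t. is_limit (c (Suc k)) \<longrightarrow>
      good (osucc (c k)) (c (Suc k)) (fst t) (fst (snd t)) (snd (snd t))"
    proof (cases "is_limit (c (Suc k))")
      case True
      have "countable {x. x < c (Suc k)}"
        by (rule countable_subset[OF _ less.prems(2)]) (use cl less_trans in blast)
      moreover have "isolated (osucc (c k))" unfolding isolated_def using osucc_not_limit[OF cl] .
      moreover have "osucc (c k) < c (Suc k)" using osucc_less_limit[OF True cS] .
      ultimately obtain D L A where "good (osucc (c k)) (c (Suc k)) D L A"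
        using less.IH[OF cl True] by blast
      then show ?thesis by (intro exI[of _ "(D,L,A)"]) simp
    qed simp
  qed
  then obtain T where T: "\<And>k. is_limit (c (Suc k)) \<Longrightarrow>
      good (osucc (c k)) (c (Suc k)) (fst (T k)) (fst (snd (T k))) (snd (snd (T k)))"
    by (metis (no_types) choice)
  define D where "D k = fst (T k)" for k
  define L where "L k = fst (snd (T k))" for k
  define A where "A k = snd (snd (T k))" for k
  have sg: "good (osucc (c k)) (c (Suc k)) (D k) (L k) (A k)" if "is_limit (c (Suc k))" for k
    using T[OF that] unfolding D_def L_def A_def .
  have s_img: "D k ` {osucc (c k)..<c (Suc k)} = LIMs {osucc (c k)<..c (Suc k)}"
    if "is_limit (c (Suc k))" for k using good_1[OF sg[OF that]] .
  have s_A: "A k m j \<in> {osucc (c k)..<c (Suc k)}"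
    if "is_limit (c (Suc k))" "m \<in> LIMs {osucc (c k)<..c (Suc k)}" for k m j
    using good_3[OF sg[OF that(1)]] that(2) by blast
  have s_it: "\<exists>s>0. (D k ^^ s) b = c (Suc k) \<and> (\<forall>j<s. (D k ^^ j) b < (D k ^^ Suc j) b)"
    if "is_limit (c (Suc k))" "b \<in> {osucc (c k)..<c (Suc k)}" for k b
    using good_4[OF sg[OF that(1)]] that(2) by blast
  have s_mu: "strict_mono (A k m) \<and> (\<forall>j. A k m j < m) \<and> (\<forall>g<m. \<exists>j. g < A k m j)
      \<and> {b\<in>{osucc (c k)..<c (Suc k)}. D k b = m} = range (A k m)
      \<and> (\<forall>j. L k (A k m j) = L k m + j)"
    if "is_limit (c (Suc k))" "m \<in> LIMs {osucc (c k)<..c (Suc k)}" for k m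
    using good_5[OF sg[OF that(1)]] that(2) by (rule bspec)
  have s_l1: "L k (c (Suc k)) = 1" "L k (osucc (c k)) = 1"
    if "is_limit (c (Suc k))" for k using good_6[OF sg[OF that]] good_7[OF sg[OF that]] by auto
  have s_c: "L k g > L k b \<and> D k g \<le> D k b"
    if "is_limit (c (Suc k))" "b \<in> {osucc (c k)..<c (Suc k)}" "b < g" "g < D k b" for k b g
    using good_8[OF sg[OF that(1)]] that(2-4) by blast
  have s_d: "L k (osucc b) = L k b + 1"
    if "is_limit (c (Suc k))" "b \<in> {osucc (c k)..<c (Suc k)}" for k b
    using good_9[OF sg[OF that(1)]] that(2) by blast
  define idx where "idx b = (LEAST k. b < c (Suc k))" for b
  define jdx where "jdx m = (LEAST k. m \<le> c (Suc k))" for m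
  have idx_eq: "idx b = k" if "c k \<le> b" "b < c (Suc k)" for b k
    unfolding idx_def
  proof (rule Least_equality)
    show "b < c (Suc k)" by fact
    fix j assume j: "b < c (Suc j)"
    show "k \<le> j"
    proof (rule ccontr)
      assume "\<not> k \<le> j"
      hence "Suc j \<le> k" by simp
      hence "c (Suc j) \<le> c k" using cle by simp
      with that(1) j show False by simp
    qed
  qed
  have jdx_eq: "jdx m = k" if "c k < m" "m \<le> c (Suc k)" for m k
    unfolding jdx_def
  proof (rule Least_equality)
    show "m \<le> c (Suc k)" by fact
    fix j assume j: "m \<le> c (Suc j)"
    show "k \<le> j"
    proof (rule ccontr)
      assume "\<not> k \<le> j"
      hence "Suc j \<le> k" by simp
      hence "c (Suc j) \<le> c k" using cle by simp
      with that(1) j show False by simp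
    qed
  qed
  have idx_prop: "c (idx b) \<le> b \<and> b < c (Suc (idx b))" if hh: "rho \<le> b" "b < lam" for b
  proof -
    obtain k where "b < c k" using cof hh(2) by blast
    hence ex: "b < c (Suc k)" using cS[of k] by simp
    have 1: "b < c (Suc (idx b))" unfolding idx_def by (rule LeastI[of _ k]) (rule ex)
    have 2: "c (idx b) \<le> b"
    proof (cases "idx b")
      case 0 then show ?thesis using c0 hh by simp
    next
      case (Suc j)
      then have "\<not> b < c (Suc j)" unfolding idx_def using not_less_Least[of j] by (metis lessI)
      then show ?thesis using Suc by simp
    qed
    show ?thesis using 1 2 by simp
  qed
  have jdx_prop: "c (jdx m) < m \<and> m \<le> c (Suc (jdx m))" if hh: "rho < m" "m < lam" for m
  proof -
    obtain k where "m < c k" using cof hh(2) by blast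
    hence ex: "m \<le> c (Suc k)" using cS[of k] by simp
    have 1: "m \<le> c (Suc (jdx m))" unfolding jdx_def by (rule LeastI[of _ k]) (rule ex)
    have 2: "c (jdx m) < m"
    proof (cases "jdx m")
      case 0 then show ?thesis using c0 hh by simp
    next
      case (Suc j)
      then have "\<not> m \<le> c (Suc j)" unfolding jdx_def using not_less_Least[of j] by (metis lessI)
      then show ?thesis using Suc by simp
    qed
    show ?thesis using 1 2 by simp
  qed
  have reg: "is_limit (c (Suc k)) \<and> osucc (c k) \<le> b" if "c k < b" "b \<le> c (Suc k)" "b \<noteq> c (Suc k) \<or> is_limit b" for k b
  proof -
    have o: "osucc (c k) \<le> b" using osucc_le that(1) by blast
    have "c (Suc k) \<noteq> osucc (c k)"
    proof
      assume e: "c (Suc k) = osucc (c k)"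
      show False
      proof (cases "b = c (Suc k)")
        case True then show ?thesis using that(3) e osucc_not_limit[OF cl[of k]] by simp
      next
        case False then show ?thesis using o e that(2) by simp
      qed
    qed
    then show ?thesis using cs[of k] o by blast
  qed
  have regR: "is_limit (c (Suc k)) \<and> b \<in> {osucc (c k)..<c (Suc k)}" if "c k < b" "b < c (Suc k)" for k b
    using reg[OF that(1) less_imp_le[OF that(2)]] that by (metis atLeastLessThan_iff less_irrefl)
  define dia where "dia b = (if b = c (idx b) then lam else D (idx b) b)" for b
  define ell where "ell b = (if b = lam then 1 else if b = c (idx b) then idx b + 1
      else L (idx b) b + idx b + 1)" for b
  define a where "a m = (if m = lam then c else A (jdx m) m)" for m
  have idx_c: "idx (c k) = k" for k using idx_eq[of k "c k"] cS by simp
  have ell_lam: "ell lam = 1" unfolding ell_def by simp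
  have dia_c: "dia (c k) = lam" for k unfolding dia_def idx_c by simp
  have ell_c: "ell (c k) = k + 1" for k unfolding ell_def idx_c using cl[of k] by (metis less_irrefl)
  have dia_R: "dia b = D k b" if "c k < b" "b < c (Suc k)" for k b
    using idx_eq[of k b] that unfolding dia_def by auto
  have ell_R: "ell b = L k b + k + 1" if "c k < b" "b \<le> c (Suc k)" "is_limit (c (Suc k))" for k b
  proof (cases "b = c (Suc k)")
    case True then show ?thesis using ell_c s_l1[OF that(3)] by simp
  next
    case False
    then have "b < c (Suc k)" using that by simp
    then show ?thesis using idx_eq[of k b] that cl[of "Suc k"] unfolding ell_def by auto
  qed
  have ell_R': "ell b = L k b + k + 1" if "c k < b" "b < c (Suc k)" "is_limit (c (Suc k))" for k b
    using ell_R[OF that(1) less_imp_le[OF that(2)] that(3)] .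
  have inR: "b = c (idx b) \<or> (c (idx b) < b \<and> b < c (Suc (idx b)))" if "rho \<le> b" "b < lam" for b
    using idx_prop[OF that] by auto
  have LIMsub: "LIMs {osucc (c k)<..c (Suc k)} \<subseteq> LIMs {rho<..lam}" for k
  proof -
    have "rho \<le> c k" using c0 cle[of 0 k] by simp
    hence "rho < osucc (c k)" using osucc_gt[OF cl[of k]] by simp
    moreover have "c (Suc k) \<le> lam" using cl[of "Suc k"] by simp
    ultimately show ?thesis unfolding LIMs_def by auto
  qed
  have Isub: "{osucc (c k)..<c (Suc k)} \<subseteq> {c k<..<c (Suc k)}" for k
    using osucc_gt[OF cl[of k]] by auto
  have rho_le: "rho \<le> c k" for k using c0 cle[of 0 k] by simp
  have inRng: "x \<in> {rho..<lam}" if "x \<in> {c k<..<c (Suc k)}" for x k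
  proof -
    have "rho \<le> x" using rho_le[of k] that by (meson greaterThanLessThan_iff less_imp_le order.trans)
    moreover have "x < lam" using cl[of "Suc k"] that by (meson greaterThanLessThan_iff less_trans)
    ultimately show ?thesis by simp
  qed
  have inLIM: "m \<in> LIMs {osucc (c k)<..c (Suc k)}" if "c k < m" "m \<le> c (Suc k)" "is_limit m" for k m
  proof -
    have "osucc (c k) \<le> m" using reg[OF that(1,2)] that(3) by blast
    moreover have "osucc (c k) \<noteq> m" using osucc_not_limit[OF cl[of k]] that(3) by auto
    ultimately show ?thesis using that unfolding LIMs_def by auto
  qed
  have "good rho lam dia ell a"
    unfolding good_def
  proof (intro conjI)
    show "dia ` {rho..<lam} = LIMs {rho<..lam}"
    proof
      show "dia ` {rho..<lam} \<subseteq> LIMs {rho<..lam}"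
      proof
        fix y assume "y \<in> dia ` {rho..<lam}"
        then obtain b where b: "rho \<le> b" "b < lam" "y = dia b" by auto
        show "y \<in> LIMs {rho<..lam}"
        proof (cases "b = c (idx b)")
          case True then show ?thesis using b dia_c less.prems(1,4) unfolding LIMs_def by (metis greaterThanAtMost_iff mem_Collect_eq order_refl)
        next
          case False
          let ?k = "idx b"
          have r: "c ?k < b" "b < c (Suc ?k)" using False inR[OF b(1,2)] by auto
          have l: "is_limit (c (Suc ?k))" using regR[OF r] by simp
          have "b \<in> {osucc (c ?k)..<c (Suc ?k)}" using regR[OF r] by simp
          then have "D ?k b \<in> LIMs {osucc (c ?k)<..c (Suc ?k)}" using s_img[OF l] by blast
          then show ?thesis using LIMsub dia_R[OF r] b(3) by auto
        qed
      qed
      show "LIMs {rho<..lam} \<subseteq> dia ` {rho..<lam}"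
      proof
        fix m assume m: "m \<in> LIMs {rho<..lam}"
        show "m \<in> dia ` {rho..<lam}"
        proof (cases "m = lam")
          case True then show ?thesis using dia_c[of 0] c0 less.prems(4) by force
        next
          case False
          let ?k = "jdx m"
          have ml: "rho < m" "m < lam" "is_limit m" using m False unfolding LIMs_def by auto
          have r: "c ?k < m" "m \<le> c (Suc ?k)" using jdx_prop[OF ml(1,2)] by auto
          have l: "is_limit (c (Suc ?k))" using reg[OF r] ml(3) by blast
          have "m \<in> LIMs {osucc (c ?k)<..c (Suc ?k)}" using inLIM[OF r ml(3)] .
          then obtain b where b: "b \<in> {osucc (c ?k)..<c (Suc ?k)}" "D ?k b = m" using s_img[OF l] by force
          have "b \<in> {c ?k<..<c (Suc ?k)}" using b Isub by blast
          then have "dia b = m" using dia_R b by auto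
          moreover have "b \<in> {rho..<lam}" using \<open>b \<in> {c ?k<..<c (Suc ?k)}\<close> by (rule inRng)
          ultimately show ?thesis by force
        qed
      qed
    qed
  next
    show "\<forall>b\<in>{rho..lam}. 0 < ell b" unfolding ell_def by auto
  next
    show "\<forall>m\<in>LIMs {rho<..lam}. \<forall>k. a m k \<in> {rho..<lam}"
    proof (intro ballI allI)
      fix m k assume m: "m \<in> LIMs {rho<..lam}"
      show "a m k \<in> {rho..<lam}"
      proof (cases "m = lam")
        case True then show ?thesis unfolding a_def using rho_le cl by simp
      next
        case False
        let ?k = "jdx m"
        have ml: "rho < m" "m < lam" "is_limit m" using m False unfolding LIMs_def by auto
        have r: "c ?k < m" "m \<le> c (Suc ?k)" using jdx_prop[OF ml(1,2)] by auto
        have l: "is_limit (c (Suc ?k))" using reg[OF r] ml(3) by blast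
        have "A ?k m k \<in> {osucc (c ?k)..<c (Suc ?k)}" using s_A[OF l inLIM[OF r ml(3)]] .
        then have "A ?k m k \<in> {c ?k<..<c (Suc ?k)}" using Isub by blast
        then show ?thesis unfolding a_def using False inRng by simp
      qed
    qed
  next
    show "\<forall>b\<in>{rho..<lam}. \<exists>s>0. (dia ^^ s) b = lam \<and> (\<forall>k<s. (dia ^^ k) b < (dia ^^ Suc k) b)"
    proof
      fix b assume b: "b \<in> {rho..<lam}"
      show "\<exists>s>0. (dia ^^ s) b = lam \<and> (\<forall>k<s. (dia ^^ k) b < (dia ^^ Suc k) b)"
      proof (cases "b = c (idx b)")
        case True
        then have "dia b = lam" using dia_c by metis
        then show ?thesis using b by (intro exI[of _ 1]) auto
      next
        case False
        let ?k = "idx b"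
        have r: "c ?k < b" "b < c (Suc ?k)" using False inR b by auto
        have l: "is_limit (c (Suc ?k))" using regR[OF r] by simp
        have bI: "b \<in> {osucc (c ?k)..<c (Suc ?k)}" using regR[OF r] by simp
        obtain s where s: "s > 0" "(D ?k ^^ s) b = c (Suc ?k)"
          "\<forall>j<s. (D ?k ^^ j) b < (D ?k ^^ Suc j) b" using s_it[OF l bI] by blast
        have same: "j \<le> s \<Longrightarrow> (dia ^^ j) b = (D ?k ^^ j) b" for j
        proof (induction j)
          case 0 then show ?case by simp
        next
          case (Suc j)
          have lt: "(D ?k ^^ j) b < c (Suc ?k)" using chain_lt[OF s(3), of j s] Suc.prems s(2) by simp
          have ge: "b \<le> (D ?k ^^ j) b"
          proof (cases "j = 0")
            case True then show ?thesis by simp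
          next
            case False then show ?thesis using chain_lt[OF s(3), of 0 j] Suc.prems by simp
          qed
          have "(dia ^^ Suc j) b = dia ((D ?k ^^ j) b)" using Suc by simp
          also have "\<dots> = D ?k ((D ?k ^^ j) b)" using dia_R[of ?k] r(1) ge lt by force
          finally show ?case by simp
        qed
        show ?thesis
        proof (intro exI[of _ "Suc s"] conjI allI impI)
          show "0 < Suc s" by simp
          show "(dia ^^ Suc s) b = lam" using same[of s] s(2) dia_c by simp
          fix j assume j: "j < Suc s"
          show "(dia ^^ j) b < (dia ^^ Suc j) b"
          proof (cases "j < s")
            case True then show ?thesis using same[of j] same[of "Suc j"] s(3) by simp
          next
            case False
            then have "j = s" using j by simp
            then show ?thesis using same[of s] s(2) dia_c cl by simp
          qed
        qed
      qed
    qed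
  next
    show "\<forall>m\<in>LIMs {rho<..lam}. strict_mono (a m) \<and> (\<forall>k. a m k < m) \<and> (\<forall>g<m. \<exists>k. g < a m k)
      \<and> {b \<in> {rho..<lam}. dia b = m} = range (a m) \<and> (\<forall>k. ell (a m k) = ell m + k)"
    proof
      fix m assume m: "m \<in> LIMs {rho<..lam}"
      show "strict_mono (a m) \<and> (\<forall>k. a m k < m) \<and> (\<forall>g<m. \<exists>k. g < a m k)
        \<and> {b \<in> {rho..<lam}. dia b = m} = range (a m) \<and> (\<forall>k. ell (a m k) = ell m + k)"
      proof (cases "m = lam")
        case True
        have am: "a m = c" unfolding a_def using True by simp
        have pre: "{b \<in> {rho..<lam}. dia b = m} = range c"
        proof
          show "range c \<subseteq> {b \<in> {rho..<lam}. dia b = m}" using dia_c rho_le cl True by auto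
          show "{b \<in> {rho..<lam}. dia b = m} \<subseteq> range c"
          proof
            fix b assume b: "b \<in> {b \<in> {rho..<lam}. dia b = m}"
            show "b \<in> range c"
            proof (cases "b = c (idx b)")
              case True then show ?thesis by (metis rangeI)
            next
              case False
              let ?k = "idx b"
              have r: "c ?k < b" "b < c (Suc ?k)" using False inR b by auto
              have l: "is_limit (c (Suc ?k))" using regR[OF r] by simp
              have bI: "b \<in> {osucc (c ?k)..<c (Suc ?k)}" using regR[OF r] by simp
              have "D ?k b \<in> LIMs {osucc (c ?k)<..c (Suc ?k)}" using s_img[OF l] bI by blast
              then have "D ?k b \<le> c (Suc ?k)" unfolding LIMs_def by auto
              moreover have "D ?k b = lam" using dia_R[OF r] b True by simp
              ultimately show ?thesis using cl[of "Suc ?k"] by simp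
            qed
          qed
        qed
        show ?thesis unfolding am pre
          using cm cl cof ell_c True ell_lam by simp
      next
        case False
        let ?k = "jdx m"
        have ml: "rho < m" "m < lam" "is_limit m" using m False unfolding LIMs_def by auto
        have r: "c ?k < m" "m \<le> c (Suc ?k)" using jdx_prop[OF ml(1,2)] by auto
        have l: "is_limit (c (Suc ?k))" using reg[OF r] ml(3) by blast
        have mL: "m \<in> LIMs {osucc (c ?k)<..c (Suc ?k)}" using inLIM[OF r ml(3)] .
        have am: "a m = A ?k m" unfolding a_def using False by simp
        note S = s_mu[OF l mL]
        have AR: "A ?k m j \<in> {c ?k<..<c (Suc ?k)}" for j using s_A[OF l mL] Isub by blast
        have pre: "{b \<in> {rho..<lam}. dia b = m} = range (A ?k m)"
        proof
          show "range (A ?k m) \<subseteq> {b \<in> {rho..<lam}. dia b = m}"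
          proof
            fix b assume "b \<in> range (A ?k m)"
            then have b1: "b \<in> {b\<in>{osucc (c ?k)..<c (Suc ?k)}. D ?k b = m}" using S by blast
            then have "b \<in> {c ?k<..<c (Suc ?k)}" using Isub by blast
            then show "b \<in> {b \<in> {rho..<lam}. dia b = m}" using dia_R[of ?k b] b1 inRng[of b ?k]
              by simp
          qed
          show "{b \<in> {rho..<lam}. dia b = m} \<subseteq> range (A ?k m)"
          proof
            fix b assume b: "b \<in> {b \<in> {rho..<lam}. dia b = m}"
            show "b \<in> range (A ?k m)"
            proof (cases "b = c (idx b)")
              case True then have "dia b = lam" using dia_c by metis
              then show ?thesis using b False by simp
            next
              case nc: False
              let ?i = "idx b"
              have r': "c ?i < b" "b < c (Suc ?i)" using nc inR b by auto
              have l': "is_limit (c (Suc ?i))" using regR[OF r'] by simp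
              have bI: "b \<in> {osucc (c ?i)..<c (Suc ?i)}" using regR[OF r'] by simp
              have "D ?i b \<in> LIMs {osucc (c ?i)<..c (Suc ?i)}" using s_img[OF l'] bI by blast
              moreover have Db: "D ?i b = m" using dia_R[OF r'] b by simp
              ultimately have "c ?i < m" "m \<le> c (Suc ?i)" unfolding LIMs_def
                using osucc_gt[OF cl[of ?i]] by auto
              then have "?k = ?i" using jdx_eq by simp
              then show ?thesis using S bI Db by auto
            qed
          qed
        qed
        have em: "ell m = L ?k m + ?k + 1" using ell_R[OF r l] .
        have ea: "ell (A ?k m j) = L ?k (A ?k m j) + ?k + 1" for j
          using ell_R'[of ?k "A ?k m j"] AR[of j] l by simp
        show ?thesis unfolding am pre using S em ea by simp
      qed
    qed
  next
    show "ell lam = 1" unfolding ell_def by simp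
  next
    show "ell rho = 1" using ell_c[of 0] c0 by simp
  next
    show "\<forall>b\<in>{rho..<lam}. \<forall>g. b < g \<and> g < dia b \<longrightarrow> ell b < ell g \<and> dia g \<le> dia b"
    proof (intro ballI allI impI)
      fix b g assume b: "b \<in> {rho..<lam}" and g: "b < g \<and> g < dia b"
      show "ell b < ell g \<and> dia g \<le> dia b"
      proof (cases "b = c (idx b)")
        case True
        let ?k = "idx b"
        have db: "dia b = lam" using True dia_c by metis
        have gl: "rho \<le> g" "g < lam" using g b db by auto
        have "dia g \<le> lam"
        proof (cases "g = c (idx g)")
          case True then show ?thesis using dia_c by (metis order_refl)
        next
          case False
          let ?i = "idx g"
          have r': "c ?i < g" "g < c (Suc ?i)" using False inR gl by auto
          have l': "is_limit (c (Suc ?i))" using regR[OF r'] by simp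
          have bI: "g \<in> {osucc (c ?i)..<c (Suc ?i)}" using regR[OF r'] by simp
          have "D ?i g \<in> LIMs {osucc (c ?i)<..c (Suc ?i)}" using s_img[OF l'] bI by blast
          then have "D ?i g \<le> c (Suc ?i)" unfolding LIMs_def by auto
          then show ?thesis using dia_R[OF r'] cl[of "Suc ?i"] by simp
        qed
        moreover have "ell b < ell g"
        proof -
          have "b < c (Suc (idx g))" using less_trans[of b g "c (Suc (idx g))"] g idx_prop[OF gl] by simp
          then have "c ?k < c (Suc (idx g))" using True by simp
          then have ki: "?k \<le> idx g" using clt by simp
          show ?thesis
          proof (cases "g = c (idx g)")
            case gc: True
            have ne: "idx g \<noteq> ?k"
            proof
              assume "idx g = ?k"
              then have "c (idx g) = c ?k" by simp
              then have "g = b" using gc True by simp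
              with g show False by simp
            qed
            have "ell g = ell (c (idx g))" using gc by (rule arg_cong)
            also have "\<dots> = idx g + 1" by (rule ell_c)
            finally have eg: "ell g = idx g + 1" .
            have "ell b = ell (c ?k)" using True by (rule arg_cong)
            also have "\<dots> = ?k + 1" by (rule ell_c)
            finally have eb: "ell b = ?k + 1" .
            show ?thesis using eg eb ne ki by simp
          next
            case False
            let ?i = "idx g"
            have r': "c ?i < g" "g < c (Suc ?i)" using False inR gl by auto
            have l': "is_limit (c (Suc ?i))" using regR[OF r'] by simp
            have "ell g = L ?i g + ?i + 1" using ell_R'[OF r'(1) r'(2) l'] .
            moreover have "ell b = ?k + 1" using ell_c True by metis
            moreover have "L ?i g > 0"
            proof -
              have "g \<in> {osucc (c ?i)..c (Suc ?i)}" using regR[OF r'] by (auto simp: less_imp_le)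
              then show ?thesis using good_2[OF sg[OF l']] by blast
            qed
            ultimately show ?thesis using ki by simp
          qed
        qed
        ultimately show ?thesis using db by simp
      next
        case False
        let ?k = "idx b"
        have r: "c ?k < b" "b < c (Suc ?k)" using False inR b by auto
        have l: "is_limit (c (Suc ?k))" using regR[OF r] by simp
        have bI: "b \<in> {osucc (c ?k)..<c (Suc ?k)}" using regR[OF r] by simp
        have db: "dia b = D ?k b" using dia_R[OF r] .
        have "D ?k b \<in> LIMs {osucc (c ?k)<..c (Suc ?k)}" using s_img[OF l] bI by blast
        then have "D ?k b \<le> c (Suc ?k)" unfolding LIMs_def by auto
        then have rg: "c ?k < g" "g < c (Suc ?k)" using g r db by auto
        have sc: "L ?k g > L ?k b \<and> D ?k g \<le> D ?k b" using s_c[OF l bI] g db by simp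
        have "ell g = L ?k g + ?k + 1" using ell_R'[OF rg(1) rg(2) l] .
        moreover have "ell b = L ?k b + ?k + 1" using ell_R'[OF r(1) r(2) l] .
        moreover have "dia g = D ?k g" using dia_R[OF rg] .
        ultimately show ?thesis using sc db by simp
      qed
    qed
  next
    show "\<forall>b\<in>{rho..<lam}. ell (osucc b) = ell b + 1"
    proof
      fix b assume b: "b \<in> {rho..<lam}"
      have ol: "osucc b < lam" using osucc_less_limit[OF less.prems(1)] b by simp
      show "ell (osucc b) = ell b + 1"
      proof (cases "b = c (idx b)")
        case True
        let ?k = "idx b"
        have eb: "ell b = ?k + 1" using ell_c True by metis
        show ?thesis
        proof (cases "c (Suc ?k) = osucc b")
          case True
          then show ?thesis using eb ell_c[of "Suc ?k"] by simp
        next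
          case False
          then have l: "is_limit (c (Suc ?k))" using cs[of ?k] \<open>b = c ?k\<close> by metis
          have "osucc b \<le> c (Suc ?k)" using osucc_le cS \<open>b = c ?k\<close> by metis
          then have "osucc b < c (Suc ?k)" using False by simp
          moreover have "c ?k < osucc b" using osucc_gt[OF cl[of ?k]] \<open>b = c ?k\<close> by metis
          ultimately have "ell (osucc b) = L ?k (osucc b) + ?k + 1" using ell_R l by simp
          moreover have "osucc b = osucc (c ?k)" using \<open>b = c ?k\<close> by (rule arg_cong)
          then have "L ?k (osucc b) = L ?k (osucc (c ?k))" by (rule arg_cong)
          then have "L ?k (osucc b) = 1" using s_l1(2)[OF l] by (rule trans)
          ultimately show ?thesis using eb by simp
        qed
      next
        case False
        let ?k = "idx b"
        have r: "c ?k < b" "b < c (Suc ?k)" using False inR b by auto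
        have l: "is_limit (c (Suc ?k))" using regR[OF r] by simp
        have bI: "b \<in> {osucc (c ?k)..<c (Suc ?k)}" using regR[OF r] by simp
        have "osucc b \<le> c (Suc ?k)" using osucc_le r(2) by blast
        moreover have "c ?k < osucc b" using r(1) osucc_gt[OF r(2)] by simp
        ultimately have "ell (osucc b) = L ?k (osucc b) + ?k + 1" using ell_R l by simp
        moreover have "ell b = L ?k b + ?k + 1" using ell_R'[OF r(1) r(2) l] .
        ultimately show ?thesis using s_d[OF l bI] by simp
      qed
    qed
  qed
  then show ?case by blast
qed


theorem lemma3p1:
  fixes lam rho :: "'a::wellorder"
  assumes "is_limit lam" and "countable {x. x < lam}"
    and "isolated rho" and "rho < lam"
  shows "\<exists>(dia :: 'a \<Rightarrow> 'a) (ell :: 'a \<Rightarrow> nat) (a :: 'a \<Rightarrow> nat \<Rightarrow> 'a).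
    dia ` {rho..<lam} = LIMs {rho<..lam}
  \<and> (\<forall>b\<in>{rho..lam}. ell b > 0)
  \<and> (\<forall>\<mu>\<in>LIMs {rho<..lam}. \<forall>k. a \<mu> k \<in> {rho..<lam})
  \<and> (\<forall>b\<in>{rho..<lam}. \<exists>s>0. (dia ^^ s) b = lam \<and>
        (\<forall>k<s. (dia ^^ k) b < (dia ^^ Suc k) b))
  \<and> (\<forall>\<mu>\<in>LIMs {rho<..lam}.
        strict_mono (a \<mu>)
      \<and> (\<forall>k. a \<mu> k < \<mu>) \<and> (\<forall>g<\<mu>. \<exists>k. g < a \<mu> k)
      \<and> {b\<in>{rho..<lam}. dia b = \<mu>} = range (a \<mu>)
      \<and> (\<forall>k. ell (a \<mu> k) = ell \<mu> + k))
  \<and> ell lam = 1 \<and> ell rho = 1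
  \<and> (\<forall>b\<in>{rho..<lam}. \<forall>g. b < g \<and> g < dia b \<longrightarrow> ell g > ell b \<and> dia g \<le> dia b)
  \<and> (\<forall>b\<in>{rho..<lam}. ell (osucc b) = ell b + 1)"
  using main[OF assms(1,2,3,4)] unfolding good_def by blast

end
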